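(* Let $A$ and $G$ be $n\times n$ symmetric positive definite matrices with $A\preceq G$, and let $u\in\mathbb{R}^n$ satisfy $u^\top(G-A)u>0$. Then $\mathrm{rank}(\mathrm{SR1}(A,G,u)-A)=\mathrm{rank}(G-A)-1$ and $\kappa(\mathrm{SR1}(A,G,u)-A)\le\kappa(G-A)$.
   Context: For a positive semidefinite matrix $B$, $\kappa(B)=\lambda_{\max}(B)/\lambda_{\min}(B)$, where $\lambda_{\min}(B)$ is the smallest nonzero eigenvalue of $B$. $\mathrm{SR1}(A,G,u)=G$ if $(G-A)u=0$, and otherwise $\mathrm{SR1}(A,G,u)=G-\frac{(G-A)uu^\top(G-A)}{u^\top(G-A)u}$. *)

theory Defs
  imports "HOL-Analysis.Analysis"
begin

definition sym_mat :: "real^'n^'n \<Rightarrow> bool" where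
  "sym_mat A \<longleftrightarrow> transpose A = A"

definition pos_def :: "real^'n^'n \<Rightarrow> bool" where
  "pos_def A \<longleftrightarrow> sym_mat A \<and> (\<forall>x. x \<noteq> 0 \<longrightarrow> x \<bullet> (A *v x) > 0)"

definition pos_semidef :: "real^'n^'n \<Rightarrow> bool" where
  "pos_semidef A \<longleftrightarrow> sym_mat A \<and> (\<forall>x. x \<bullet> (A *v x) \<ge> 0)"

definition loewner_le :: "real^'n^'n \<Rightarrow> real^'n^'n \<Rightarrow> bool" where
  "loewner_le A G \<longleftrightarrow> pos_semidef (G - A)"

definition outer :: "real^'n \<Rightarrow> real^'n \<Rightarrow> real^'n^'n" where
  "outer u v = (\<chi> i j. u $ i * v $ j)"

definition eigenvalues :: "real^'n^'n \<Rightarrow> real set" where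
  "eigenvalues B = {c. \<exists>v. v \<noteq> 0 \<and> B *v v = c *s v}"

definition lambda_max :: "real^'n^'n \<Rightarrow> real" where
  "lambda_max B = Max (eigenvalues B)"

definition lambda_min :: "real^'n^'n \<Rightarrow> real" where
  "lambda_min B = Min (eigenvalues B - {0})"

definition kappa :: "real^'n^'n \<Rightarrow> real" where
  "kappa B = lambda_max B / lambda_min B"

definition SR1 :: "real^'n^'n \<Rightarrow> real^'n^'n \<Rightarrow> real^'n \<Rightarrow> real^'n^'n" where
  "SR1 A G u = (if (G - A) *v u = 0 then G
     else G - (1 / (u \<bullet> ((G - A) *v u))) *\<^sub>R ((G - A) ** outer u u ** (G - A)))"

end

theory Submission
  imports Defs
begin

definition symm :: "real^'n^'n \<Rightarrow> bool" where
  "symm M \<longleftrightarrow> (\<forall>x y. x \<bullet> (M *v y) = (M *v x) \<bullet> y)"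

lemma sym_mat_symm: "sym_mat M \<Longrightarrow> symm M"
  unfolding symm_def sym_mat_def
  by (metis dot_lmul_matrix vector_transpose_matrix)

lemma quad_disc:
  fixes a b c :: real
  assumes "\<forall>t. 0 \<le> a + 2*b*t + c*t^2" and "c \<ge> 0"
  shows "b^2 \<le> a*c"
proof (cases "c = 0")
  case True
  have "b = 0"
  proof (rule ccontr)
    assume "b \<noteq> 0"
    have "0 \<le> a + 2*b*(-(a+1)/(2*b)) + c*(-(a+1)/(2*b))^2" using assms by blast
    then show False using True \<open>b \<noteq> 0\<close> by (simp add: field_simps)
  qed
  then show ?thesis using assms(1)[rule_format, of 0] True by simp
next
  case False
  hence c: "c > 0" using assms(2) by simp
  have "0 \<le> a + 2*b*(-b/c) + c*(-b/c)^2" using assms by blast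
  also have "\<dots> = a - b^2/c" using c by (simp add: field_simps power2_eq_square)
  finally have "b^2/c \<le> a" by linarith
  then show ?thesis using c by (simp add: pos_divide_le_eq)
qed

lemma form_expand:
  assumes "symm M"
  shows "(x + t *\<^sub>R y) \<bullet> (M *v (x + t *\<^sub>R y)) = x \<bullet> (M *v x) + 2 * (x \<bullet> (M *v y)) * t + (y \<bullet> (M *v y)) * t^2"
proof -
  have s: "y \<bullet> (M *v x) = x \<bullet> (M *v y)" using assms unfolding symm_def by (metis inner_commute)
  show ?thesis
    by (simp add: matrix_vector_right_distrib matrix_vector_mult_scaleR inner_add_left inner_add_right s power2_eq_square algebra_simps)
qed

lemma form_CS:
  assumes "symm M" and "\<forall>t. 0 \<le> (x + t *\<^sub>R y) \<bullet> (M *v (x + t *\<^sub>R y))" and "y \<bullet> (M *v y) \<ge> 0"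
  shows "(x \<bullet> (M *v y))^2 \<le> (x \<bullet> (M *v x)) * (y \<bullet> (M *v y))"
  using quad_disc[of "x \<bullet> (M *v x)" "x \<bullet> (M *v y)" "y \<bullet> (M *v y)"] assms form_expand[OF assms(1)]
  by simp

lemma form_null:
  assumes "symm M" and "\<forall>t. 0 \<le> (x + t *\<^sub>R y) \<bullet> (M *v (x + t *\<^sub>R y))" and "y \<bullet> (M *v y) \<ge> 0"
    and "x \<bullet> (M *v x) = 0"
  shows "x \<bullet> (M *v y) = 0"
  using form_CS[OF assms(1-3)] assms(4) by simp

lemma eig_finite:
  assumes "symm M"
  shows "finite (eigenvalues M)"
proof -
  define f where "f \<mu> = (SOME v. v \<noteq> 0 \<and> M *v v = \<mu> *s v)" for \<mu>
  have f: "f \<mu> \<noteq> 0 \<and> M *v f \<mu> = \<mu> *\<^sub>R f \<mu>" if "\<mu> \<in> eigenvalues M" for \<mu>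
  proof -
    have "\<exists>v. v \<noteq> 0 \<and> M *v v = \<mu> *s v" using that unfolding eigenvalues_def by simp
    then have "f \<mu> \<noteq> 0 \<and> M *v f \<mu> = \<mu> *s f \<mu>" unfolding f_def by (rule someI_ex)
    then show ?thesis by (simp add: scalar_mult_eq_scaleR)
  qed
  have inj: "inj_on f (eigenvalues M)"
  proof (rule inj_onI)
    fix a b assume a: "a \<in> eigenvalues M" and b: "b \<in> eigenvalues M" and e: "f a = f b"
    have "a *\<^sub>R f a = M *v f a" using f[OF a] by simp
    also have "\<dots> = b *\<^sub>R f a" using f[OF b] e by simp
    finally have "a *\<^sub>R f a = b *\<^sub>R f a" .
    thus "a = b" using f[OF a] by simp
  qed
  have "pairwise orthogonal (f ` eigenvalues M)"
    unfolding pairwise_def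
  proof (intro ballI impI)
    fix p q assume p: "p \<in> f ` eigenvalues M" and q: "q \<in> f ` eigenvalues M" and ne: "p \<noteq> q"
    obtain a where a: "a \<in> eigenvalues M" "p = f a" using p by blast
    obtain b where b: "b \<in> eigenvalues M" "q = f b" using q by blast
    have "a \<noteq> b" using ne a b by auto
    have "f a \<bullet> (M *v f b) = (M *v f a) \<bullet> f b" using assms unfolding symm_def by simp
    hence "b * (f a \<bullet> f b) = a * (f a \<bullet> f b)" using f[OF a(1)] f[OF b(1)]
      by (simp only: inner_scaleR_left inner_scaleR_right)
    hence "f a \<bullet> f b = 0" using \<open>a \<noteq> b\<close> by simp
    thus "orthogonal p q" using a b unfolding orthogonal_def by simp
  qed
  moreover have "0 \<notin> f ` eigenvalues M"
  proof
    assume "0 \<in> f ` eigenvalues M"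
    then obtain a where a: "a \<in> eigenvalues M" "0 = f a" by (rule imageE)
    thus False using f[OF a(1)] by simp
  qed
  ultimately have "independent (f ` eigenvalues M)" by (rule pairwise_orthogonal_independent)
  hence "finite (f ` eigenvalues M)" by (rule finiteI_independent)
  thus ?thesis using inj by (rule finite_imageD)
qed

lemma range_sub: "subspace (range (\<lambda>x. (M::real^'n^'m) *v x))"
  unfolding subspace_def
proof (intro conjI ballI allI)
  have "(0::real^'m) = M *v 0" by simp
  thus "(0::real^'m) \<in> range (\<lambda>x. M *v x)" by (rule range_eqI)
next
  fix x y assume "x \<in> range (\<lambda>x. M *v x)" "y \<in> range (\<lambda>x. M *v x)"
  then obtain a b where "x = M *v a" "y = M *v b" by blast
  hence "x + y = M *v (a + b)" by (simp add: matrix_vector_right_distrib)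
  thus "x + y \<in> range (\<lambda>x. M *v x)" by (rule range_eqI)
next
  fix c :: real and x assume "x \<in> range (\<lambda>x. M *v x)"
  then obtain a where "x = M *v a" by blast
  hence "c *\<^sub>R x = M *v (c *\<^sub>R a)" by (simp add: matrix_vector_mult_scaleR)
  thus "c *\<^sub>R x \<in> range (\<lambda>x. M *v x)" by (rule range_eqI)
qed

lemma smat_mv: "(m *\<^sub>R mat 1 :: real^'n^'n) *v z = m *\<^sub>R z"
  using scaleR_matrix_vector_assoc[of m "mat 1 :: real^'n^'n" z] by simp

lemma shift_mv: "((M::real^'n^'n) - m *\<^sub>R mat 1) *v z = M *v z - m *\<^sub>R z"
  by (simp add: matrix_vector_mult_diff_rdistrib smat_mv)

lemma shift_mv2: "(m *\<^sub>R mat 1 - (M::real^'n^'n)) *v z = m *\<^sub>R z - M *v z"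
  by (simp add: matrix_vector_mult_diff_rdistrib smat_mv)

lemma symm_shift:
  assumes "symm M"
  shows "symm (M - m *\<^sub>R mat 1)" and "symm (m *\<^sub>R mat 1 - M)"
  using assms unfolding symm_def shift_mv shift_mv2
  by (simp_all add: inner_diff_left inner_diff_right inner_commute)

lemma psd_null:
  assumes "symm M" and "\<forall>t. 0 \<le> (x + t *\<^sub>R (M *v x)) \<bullet> (M *v (x + t *\<^sub>R (M *v x)))"
    and "(M *v x) \<bullet> (M *v (M *v x)) \<ge> 0" and "x \<bullet> (M *v x) = 0"
  shows "M *v x = 0"
proof -
  have "x \<bullet> (M *v (M *v x)) = 0" by (rule form_null[OF assms])
  moreover have "x \<bullet> (M *v (M *v x)) = (M *v x) \<bullet> (M *v x)"
    using assms(1) unfolding symm_def by simp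
  ultimately show ?thesis by simp
qed

lemma max_eig:
  fixes M :: "real^'n^'n"
  assumes "symm M"
  shows "\<exists>\<mu>\<in>eigenvalues M. \<forall>x. x \<bullet> (M *v x) \<le> \<mu> * (x \<bullet> x)"
proof -
  let ?S = "sphere (0::real^'n) 1"
  have "axis undefined 1 \<in> ?S" by simp
  hence ne: "?S \<noteq> {}" by auto
  have cont: "continuous_on ?S (\<lambda>x. x \<bullet> (M *v x))"
    by (intro continuous_intros linear_continuous_on matrix_vector_mul_bounded_linear)
  obtain x where x: "x \<in> ?S" "\<And>y. y\<in>?S \<Longrightarrow> y \<bullet> (M *v y) \<le> x \<bullet> (M *v x)"
    using continuous_attains_sup[OF compact_sphere ne cont] by auto
  define \<mu> where "\<mu> = x \<bullet> (M *v x)"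
  have xx: "x \<bullet> x = 1" using x(1) by (simp add: dot_square_norm)
  have bound: "y \<bullet> (M *v y) \<le> \<mu> * (y \<bullet> y)" for y
  proof (cases "y = 0")
    case True then show ?thesis by simp
  next
    case False
    define z where "z = (1 / norm y) *\<^sub>R y"
    have "z \<in> ?S" using False by (simp add: z_def)
    hence "z \<bullet> (M *v z) \<le> \<mu>" using x(2) unfolding \<mu>_def by simp
    moreover have "z \<bullet> (M *v z) = (y \<bullet> (M *v y)) / (norm y)^2"
      by (simp add: z_def matrix_vector_mult_scaleR power2_eq_square)
    moreover have "y \<bullet> y = (norm y)^2" by (simp add: dot_square_norm)
    moreover have "norm y > 0" using False by simp
    ultimately show ?thesis by (simp add: divide_le_eq mult.commute)
  qed
  define B where "B = \<mu> *\<^sub>R mat 1 - M"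
  have sB: "symm B" unfolding B_def by (rule symm_shift(2)[OF assms])
  have Bv: "B *v z = \<mu> *\<^sub>R z - M *v z" for z unfolding B_def by (rule shift_mv2)
  have psd: "0 \<le> z \<bullet> (B *v z)" for z
    using bound[of z] by (simp add: Bv inner_diff_right)
  have x0: "x \<bullet> (B *v x) = 0" using xx by (simp add: Bv inner_diff_right \<mu>_def)
  have "B *v x = 0" by (rule psd_null[OF sB _ _ x0]) (simp_all add: psd)
  hence "M *v x = \<mu> *s x" by (simp add: Bv scalar_mult_eq_scaleR)
  moreover have "x \<noteq> 0" using x(1) by auto
  ultimately have "\<mu> \<in> eigenvalues M" unfolding eigenvalues_def by blast
  thus ?thesis using bound by blast
qed

lemma min_eig_range:
  fixes M :: "real^'n^'n"
  assumes "symm M" and psdM: "\<And>x. 0 \<le> x \<bullet> (M *v x)" and "M \<noteq> 0"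
  shows "\<exists>m\<in>eigenvalues M - {0}. \<forall>y\<in>range (\<lambda>x. M *v x). m * (y \<bullet> y) \<le> y \<bullet> (M *v y)"
proof -
  let ?R = "range (\<lambda>x. M *v x)"
  have sR: "subspace ?R" by (rule range_sub)
  let ?S = "?R \<inter> sphere (0::real^'n) 1"
  obtain w where w: "M *v w \<noteq> 0" using assms(3) matrix_eq[of M 0] by auto
  have mem: "(1 / norm (M *v w)) *\<^sub>R (M *v w) \<in> ?S"
  proof
    have "(1 / norm (M *v w)) *\<^sub>R (M *v w) = M *v ((1 / norm (M *v w)) *\<^sub>R w)"
      by (simp add: matrix_vector_mult_scaleR)
    thus "(1 / norm (M *v w)) *\<^sub>R (M *v w) \<in> ?R" by (rule range_eqI)
    show "(1 / norm (M *v w)) *\<^sub>R (M *v w) \<in> sphere 0 1" using w by simp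
  qed
  have ne: "?S \<noteq> {}" using mem by (metis empty_iff)
  have cS: "compact ?S" by (rule closed_Int_compact[OF closed_subspace[OF sR] compact_sphere])
  have cont: "continuous_on ?S (\<lambda>x. x \<bullet> (M *v x))"
    by (intro continuous_intros linear_continuous_on matrix_vector_mul_bounded_linear)
  obtain x where x: "x \<in> ?S" "\<forall>y\<in>?S. x \<bullet> (M *v x) \<le> y \<bullet> (M *v y)"
    using continuous_attains_inf[OF cS ne cont] by (rule bexE)
  have xR: "x \<in> ?R" using x(1) by simp
  define m where "m = x \<bullet> (M *v x)"
  have xx: "x \<bullet> x = 1" using x(1) by (simp add: dot_square_norm)
  have bound: "m * (y \<bullet> y) \<le> y \<bullet> (M *v y)" if yR: "y \<in> ?R" for y
  proof (cases "y = 0")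
    case True then show ?thesis by simp
  next
    case False
    define z where "z = (1 / norm y) *\<^sub>R y"
    have "z \<in> ?R" unfolding z_def by (rule subspace_scale[OF sR yR])
    moreover have "z \<in> sphere 0 1" using False by (simp add: z_def)
    ultimately have "z \<in> ?S" by simp
    hence "m \<le> z \<bullet> (M *v z)" unfolding m_def by (rule bspec[OF x(2)])
    moreover have "z \<bullet> (M *v z) = (y \<bullet> (M *v y)) / (norm y)^2"
      by (simp add: z_def matrix_vector_mult_scaleR power2_eq_square)
    moreover have "y \<bullet> y = (norm y)^2" by (simp add: dot_square_norm)
    moreover have "norm y > 0" using False by simp
    ultimately show ?thesis by (simp add: le_divide_eq mult.commute)
  qed
  define B where "B = M - m *\<^sub>R mat 1"
  have sB: "symm B" unfolding B_def by (rule symm_shift(1)[OF assms(1)])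
  have Bv: "B *v z = M *v z - m *\<^sub>R z" for z unfolding B_def by (rule shift_mv)
  have psd: "0 \<le> z \<bullet> (B *v z)" if "z \<in> ?R" for z
    using bound[OF that] by (simp add: Bv inner_diff_right)
  have x0: "x \<bullet> (B *v x) = 0" using xx by (simp add: Bv inner_diff_right m_def)
  have MxR: "M *v x \<in> ?R" by simp
  have BxR: "B *v x \<in> ?R" unfolding Bv
    by (rule subspace_diff[OF sR MxR subspace_scale[OF sR xR]])
  have "B *v x = 0"
  proof (rule psd_null[OF sB _ _ x0])
    show "\<forall>t. 0 \<le> (x + t *\<^sub>R (B *v x)) \<bullet> (B *v (x + t *\<^sub>R (B *v x)))"
    proof
      fix t :: real
      have "x + t *\<^sub>R (B *v x) \<in> ?R"
        by (rule subspace_add[OF sR xR subspace_scale[OF sR BxR]])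
      thus "0 \<le> (x + t *\<^sub>R (B *v x)) \<bullet> (B *v (x + t *\<^sub>R (B *v x)))" by (rule psd)
    qed
    show "0 \<le> (B *v x) \<bullet> (B *v (B *v x))" by (rule psd[OF BxR])
  qed
  hence Mx: "M *v x = m *\<^sub>R x" by (simp add: Bv)
  have "m \<noteq> 0"
  proof
    assume "m = 0"
    hence "M *v x = 0" using Mx by simp
    obtain z0 where z0: "x = M *v z0" using xR by blast
    have "x \<bullet> x = (M *v z0) \<bullet> x" using z0 by simp
    also have "\<dots> = z0 \<bullet> (M *v x)" using assms(1) unfolding symm_def by simp
    also have "\<dots> = 0" using \<open>M *v x = 0\<close> by simp
    finally show False using xx by simp
  qed
  moreover have "x \<noteq> 0" using xx by auto
  ultimately have "m \<in> eigenvalues M - {0}" using Mx unfolding eigenvalues_def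
    by (simp add: scalar_mult_eq_scaleR) blast
  thus ?thesis using bound by blast
qed

lemma eig_nonneg:
  assumes "\<And>x. 0 \<le> x \<bullet> (M *v x)" and "\<mu> \<in> eigenvalues M"
  shows "0 \<le> \<mu>"
proof -
  obtain v where v: "v \<noteq> 0" "M *v v = \<mu> *s v" using assms(2) unfolding eigenvalues_def by blast
  have "0 \<le> v \<bullet> (M *v v)" by (rule assms(1))
  also have "\<dots> = \<mu> * (v \<bullet> v)" using v(2) by (simp add: scalar_mult_eq_scaleR)
  finally have h: "0 \<le> \<mu> * (v \<bullet> v)" .
  have "v \<bullet> v > 0" using v(1) by simp
  show ?thesis
  proof (rule ccontr)
    assume "\<not> 0 \<le> \<mu>"
    hence "\<mu> * (v \<bullet> v) < 0" using \<open>v \<bullet> v > 0\<close> by (simp add: mult_neg_pos)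
    thus False using h by simp
  qed
qed

lemma outer_mv: "outer u u *v y = (u \<bullet> y) *\<^sub>R (u::real^'n)"
proof -
  have "(outer u u *v y) $ i = ((u \<bullet> y) *\<^sub>R u) $ i" for i
  proof -
    have "(outer u u *v y) $ i = (\<Sum>j\<in>UNIV. u $ i * u $ j * y $ j)"
      unfolding outer_def matrix_vector_mult_def by simp
    also have "\<dots> = u $ i * (\<Sum>j\<in>UNIV. u $ j * y $ j)"
      by (simp add: sum_distrib_left mult.assoc)
    also have "\<dots> = ((u \<bullet> y) *\<^sub>R u) $ i" unfolding inner_vec_def by simp
    finally show ?thesis .
  qed
  thus ?thesis by (simp add: vec_eq_iff)
qed
lemma core_basic:
  fixes D E :: "real^'n^'n"
  assumes sD: "symm D" and pD: "\<And>x. 0 \<le> x \<bullet> (D *v x)" and c: "u \<bullet> (D *v u) > 0"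
    and Ev: "\<And>x. E *v x = D *v x - (((D *v u) \<bullet> x) / (u \<bullet> (D *v u))) *\<^sub>R (D *v u)"
  shows "symm E" and "E *v u = 0" and "\<And>x. x \<bullet> (E *v x) = x \<bullet> (D *v x) - ((D *v u) \<bullet> x)^2 / (u \<bullet> (D *v u))"
    and "\<And>x. 0 \<le> x \<bullet> (E *v x)"
    and "\<And>x. E *v x = D *v (x - (((D *v u) \<bullet> x) / (u \<bullet> (D *v u))) *\<^sub>R u)"
proof -
  define c where "c = u \<bullet> (D *v u)"
  have cp: "c > 0" using c c_def by simp
  have sDx: "x \<bullet> (D *v y) = (D *v x) \<bullet> y" for x y using sD unfolding symm_def by simp
  have Ev': "E *v x = D *v x - (((D *v u) \<bullet> x) / c) *\<^sub>R (D *v u)" for x using Ev c_def by simp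
  show "symm E" unfolding symm_def
  proof (intro allI)
    fix x y
    have "x \<bullet> (E *v y) = x \<bullet> (D *v y) - (((D *v u) \<bullet> y) / c) * (x \<bullet> (D *v u))"
      by (simp add: Ev' inner_diff_right)
    also have "\<dots> = (D *v x) \<bullet> y - (((D *v u) \<bullet> x) / c) * ((D *v u) \<bullet> y)"
      using sDx[of x y] inner_commute[of x "D *v u"] by simp
    also have "\<dots> = (E *v x) \<bullet> y" by (simp add: Ev' inner_diff_left)
    finally show "x \<bullet> (E *v y) = (E *v x) \<bullet> y" .
  qed
  have Duu: "(D *v u) \<bullet> u = c" unfolding c_def by (simp add: inner_commute)
  show "E *v u = 0" using cp by (simp add: Ev' Duu)
  show quad: "x \<bullet> (E *v x) = x \<bullet> (D *v x) - ((D *v u) \<bullet> x)^2 / (u \<bullet> (D *v u))" for x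
    unfolding c_def[symmetric] by (simp add: Ev' inner_diff_right inner_commute power2_eq_square)
  show "0 \<le> x \<bullet> (E *v x)" for x
  proof -
    have "(x \<bullet> (D *v u))^2 \<le> (x \<bullet> (D *v x)) * (u \<bullet> (D *v u))"
      by (rule form_CS[OF sD]) (simp_all add: pD)
    hence "((D *v u) \<bullet> x)^2 \<le> (x \<bullet> (D *v x)) * c" by (simp add: inner_commute c_def)
    hence "((D *v u) \<bullet> x)^2 / c \<le> x \<bullet> (D *v x)" using cp by (simp add: divide_le_eq)
    thus ?thesis unfolding quad c_def[symmetric] by simp
  qed
  show "E *v x = D *v (x - (((D *v u) \<bullet> x) / (u \<bullet> (D *v u))) *\<^sub>R u)" for x
    by (simp add: Ev matrix_vector_mult_diff_distrib matrix_vector_mult_scaleR)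
qed

lemma core_rank:
  fixes D E :: "real^'n^'n"
  assumes sD: "symm D" and pD: "\<And>x. 0 \<le> x \<bullet> (D *v x)" and c: "u \<bullet> (D *v u) > 0"
    and Ev: "\<And>x. E *v x = D *v x - (((D *v u) \<bullet> x) / (u \<bullet> (D *v u))) *\<^sub>R (D *v u)"
  shows "rank E = rank D - 1"
proof -
  note B = core_basic[OF sD pD c Ev]
  let ?RE = "range (\<lambda>x. E *v x)" and ?RD = "range (\<lambda>x. D *v x)"
  have sRE: "subspace ?RE" and sRD: "subspace ?RD" by (rule range_sub)+
  have orth: "u \<bullet> y = 0" if yR: "y \<in> ?RE" for y
  proof -
    obtain x where "y = E *v x" using yR by blast
    hence "u \<bullet> y = (E *v u) \<bullet> x" using B(1) unfolding symm_def by simp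
    thus ?thesis using B(2) by simp
  qed
  have notin: "D *v u \<notin> ?RE"
  proof
    assume "D *v u \<in> ?RE"
    hence "u \<bullet> (D *v u) = 0" by (rule orth)
    thus False using c by simp
  qed
  have sub1: "insert (D *v u) ?RE \<subseteq> ?RD"
  proof
    fix y assume "y \<in> insert (D *v u) ?RE"
    then consider "y = D *v u" | x where "y = E *v x" by blast
    thus "y \<in> ?RD"
    proof cases
      case 1 thus ?thesis by (rule range_eqI)
    next
      case (2 x) thus ?thesis using B(5)[of x] by (metis range_eqI)
    qed
  qed
  have sp1: "span (insert (D *v u) ?RE) \<subseteq> ?RD" by (rule span_minimal[OF sub1 sRD])
  have sp2: "?RD \<subseteq> span (insert (D *v u) ?RE)"
  proof
    fix y assume "y \<in> ?RD"
    then obtain x where x: "y = D *v x" by blast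
    have "y = E *v x + (((D *v u) \<bullet> x) / (u \<bullet> (D *v u))) *\<^sub>R (D *v u)" using x Ev[of x] by simp
    moreover have "E *v x \<in> span (insert (D *v u) ?RE)" by (rule span_base) simp
    moreover have "D *v u \<in> span (insert (D *v u) ?RE)" by (rule span_base) simp
    ultimately show "y \<in> span (insert (D *v u) ?RE)"
      by (metis span_add span_mul scaleR_conv_of_real)
  qed
  have eq: "span (insert (D *v u) ?RE) = ?RD" using sp1 sp2 by (rule equalityI)
  have "dim ?RD = dim (insert (D *v u) ?RE)" using eq dim_span by metis
  also have "\<dots> = dim ?RE + 1"
  proof -
    have sp: "span ?RE = ?RE" by (rule span_eq_iff[THEN iffD2, OF sRE])
    have "D *v u \<notin> span ?RE" unfolding sp by (rule notin)
    thus ?thesis by (simp only: dim_insert if_not_P if_False)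
  qed
  finally show ?thesis by (simp add: rank_dim_range)
qed

lemma core_kappa:
  fixes D E :: "real^'n^'n"
  assumes sD: "symm D" and pD: "\<And>x. 0 \<le> x \<bullet> (D *v x)" and c: "u \<bullet> (D *v u) > 0"
    and Ev: "\<And>x. E *v x = D *v x - (((D *v u) \<bullet> x) / (u \<bullet> (D *v u))) *\<^sub>R (D *v u)"
    and E0: "E \<noteq> 0"
  shows "kappa E \<le> kappa D"
proof -
  note B = core_basic[OF sD pD c Ev]
  define c where "c = u \<bullet> (D *v u)"
  have cp: "c > 0" using c c_def by simp
  let ?RD = "range (\<lambda>x. D *v x)"
  have sRD: "subspace ?RD" by (rule range_sub)
  have sDx: "x \<bullet> (D *v y) = (D *v x) \<bullet> y" for x y using sD unfolding symm_def by simp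
  have sEx: "x \<bullet> (E *v y) = (E *v x) \<bullet> y" for x y using B(1) unfolding symm_def by simp
  have D0: "D \<noteq> 0" using c by auto
  obtain m where m: "m \<in> eigenvalues D - {0}" and mb: "\<forall>y\<in>?RD. m * (y \<bullet> y) \<le> y \<bullet> (D *v y)"
    using min_eig_range[OF sD pD D0] by blast
  have m0: "m \<ge> 0" using eig_nonneg[of D m] pD m by blast
  obtain MD where MD: "MD \<in> eigenvalues D" and MDb: "\<forall>x. x \<bullet> (D *v x) \<le> MD * (x \<bullet> x)"
    using max_eig[OF sD] by blast
  obtain ME where ME: "ME \<in> eigenvalues E" and MEb: "\<forall>x. x \<bullet> (E *v x) \<le> ME * (x \<bullet> x)"
    using max_eig[OF B(1)] by blast
  have ME0: "ME \<noteq> 0"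
  proof
    assume "ME = 0"
    have z: "x \<bullet> (E *v x) = 0" for x using MEb B(4)[of x] \<open>ME = 0\<close> by (metis mult_zero_left order_antisym)
    have "E *v x = 0" for x
      by (rule psd_null[OF B(1)]) (simp_all add: z)
    hence "E = 0" using matrix_eq[of E 0] by simp
    thus False using E0 by simp
  qed
  have finD: "finite (eigenvalues D)" by (rule eig_finite[OF sD])
  have finE: "finite (eigenvalues E)" by (rule eig_finite[OF B(1)])
  have upper: "\<mu> \<le> MD" if mu: "\<mu> \<in> eigenvalues E" for \<mu>
  proof -
    obtain v where v: "v \<noteq> 0" "E *v v = \<mu> *s v" using mu unfolding eigenvalues_def by blast
    have "\<mu> * (v \<bullet> v) = v \<bullet> (E *v v)" using v(2) by (simp add: scalar_mult_eq_scaleR)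
    also have "\<dots> \<le> v \<bullet> (D *v v)" unfolding B(3) using c by simp
    also have "\<dots> \<le> MD * (v \<bullet> v)" using MDb by blast
    finally have "\<mu> * (v \<bullet> v) \<le> MD * (v \<bullet> v)" .
    moreover have "v \<bullet> v > 0" using v(1) by simp
    ultimately show ?thesis by simp
  qed
  have lower: "m \<le> \<mu>" if mu: "\<mu> \<in> eigenvalues E" and mu0: "\<mu> \<noteq> 0" for \<mu>
  proof -
    obtain v where v: "v \<noteq> 0" "E *v v = \<mu> *s v" using mu unfolding eigenvalues_def by blast
    have Evv: "E *v v = \<mu> *\<^sub>R v" using v(2) by (simp add: scalar_mult_eq_scaleR)
    have vR: "v \<in> ?RD"
    proof -
      have "v = (1/\<mu>) *\<^sub>R (E *v v)" using Evv mu0 by simp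
      also have "\<dots> = D *v ((1/\<mu>) *\<^sub>R (v - (((D *v u) \<bullet> v) / (u \<bullet> (D *v u))) *\<^sub>R u))"
        unfolding B(5)[of v] by (simp add: matrix_vector_mult_scaleR)
      finally show ?thesis by (rule range_eqI)
    qed
    have uv: "u \<bullet> v = 0"
    proof -
      have "\<mu> * (u \<bullet> v) = u \<bullet> (E *v v)" using Evv by simp
      also have "\<dots> = (E *v u) \<bullet> v" by (rule sEx)
      also have "\<dots> = 0" using B(2) by simp
      finally show ?thesis using mu0 by simp
    qed
    obtain u1 z where u1: "u1 \<in> span ?RD" and zo: "\<And>w. w \<in> span ?RD \<Longrightarrow> orthogonal z w"
      and uz: "u = u1 + z"
      using orthogonal_subspace_decomp_exists[of ?RD u] by blast
    have spR: "span ?RD = ?RD" by (rule span_eq_iff[THEN iffD2, OF sRD])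
    have u1R: "u1 \<in> ?RD" using u1 spR by simp
    have zR: "z \<bullet> w = 0" if "w \<in> ?RD" for w using zo[of w] that spR unfolding orthogonal_def by simp
    have Dz: "D *v z = 0"
    proof -
      have "(D *v z) \<bullet> (D *v z) = z \<bullet> (D *v (D *v z))" using sDx by simp
      also have "\<dots> = 0" by (rule zR) simp
      finally show ?thesis by simp
    qed
    have Du: "D *v u = D *v u1" using Dz uz by (simp add: matrix_vector_right_distrib)
    have u1v: "u1 \<bullet> v = 0" using uv uz zR[OF vR] by (simp add: inner_add_left)
    have cu1: "c = u1 \<bullet> (D *v u1)"
    proof -
      have "c = (u1 + z) \<bullet> (D *v u1)" using c_def Du uz by simp
      also have "\<dots> = u1 \<bullet> (D *v u1)" using zR[of "D *v u1"] by (simp add: inner_add_left)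
      finally show ?thesis .
    qed
    define Bm where "Bm = D - m *\<^sub>R mat 1"
    have sB: "symm Bm" unfolding Bm_def by (rule symm_shift(1)[OF sD])
    have Bv: "Bm *v w = D *v w - m *\<^sub>R w" for w unfolding Bm_def by (rule shift_mv)
    have psdB: "0 \<le> w \<bullet> (Bm *v w)" if wR: "w \<in> ?RD" for w
    proof -
      have "m * (w \<bullet> w) \<le> w \<bullet> (D *v w)" by (rule bspec[OF mb wR])
      thus ?thesis by (simp add: Bv inner_diff_right)
    qed
    have CS: "(v \<bullet> (Bm *v u1))^2 \<le> (v \<bullet> (Bm *v v)) * (u1 \<bullet> (Bm *v u1))"
    proof (rule form_CS[OF sB])
      show "\<forall>t. 0 \<le> (v + t *\<^sub>R u1) \<bullet> (Bm *v (v + t *\<^sub>R u1))"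
      proof
        fix t :: real
        have "v + t *\<^sub>R u1 \<in> ?RD" by (rule subspace_add[OF sRD vR subspace_scale[OF sRD u1R]])
        thus "0 \<le> (v + t *\<^sub>R u1) \<bullet> (Bm *v (v + t *\<^sub>R u1))" by (rule psdB)
      qed
      show "0 \<le> u1 \<bullet> (Bm *v u1)" by (rule psdB[OF u1R])
    qed
    have k1: "(D *v u) \<bullet> v = v \<bullet> (Bm *v u1)"
    proof -
      have "(D *v u) \<bullet> v = (D *v u1) \<bullet> v" using Du by simp
      also have "\<dots> = v \<bullet> (D *v u1)" by (simp add: inner_commute)
      also have "\<dots> = v \<bullet> (Bm *v u1)" using u1v by (simp add: Bv inner_diff_right inner_commute)
      finally show ?thesis .
    qed
    have k2: "u1 \<bullet> (Bm *v u1) \<le> c"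
      using cu1 m0 by (simp add: Bv inner_diff_right)
    have k3: "0 \<le> v \<bullet> (Bm *v v)" by (rule psdB[OF vR])
    have "((D *v u) \<bullet> v)^2 \<le> (v \<bullet> (Bm *v v)) * c"
      using CS k1 k2 k3 by (metis mult_left_mono order_trans)
    hence k4: "((D *v u) \<bullet> v)^2 / c \<le> v \<bullet> (Bm *v v)" using cp by (simp add: divide_le_eq)
    have "m * (v \<bullet> v) = v \<bullet> (D *v v) - v \<bullet> (Bm *v v)" by (simp add: Bv inner_diff_right)
    also have "\<dots> \<le> v \<bullet> (E *v v)" unfolding B(3) c_def[symmetric] using k4 by simp
    also have "\<dots> = \<mu> * (v \<bullet> v)" using Evv by simp
    finally have "m * (v \<bullet> v) \<le> \<mu> * (v \<bullet> v)" .
    moreover have "v \<bullet> v > 0" using v(1) by simp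
    ultimately show ?thesis by simp
  qed
  have neE: "eigenvalues E \<noteq> {}" using ME by auto
  have neE0: "eigenvalues E - {0} \<noteq> {}" using ME ME0 by auto
  have neD0: "eigenvalues D - {0} \<noteq> {}" using m by auto
  have lmaxE: "lambda_max E \<in> eigenvalues E" unfolding lambda_max_def using finE neE by (rule Max_in)
  have lminE: "lambda_min E \<in> eigenvalues E - {0}" unfolding lambda_min_def
    using finE neE0 by (intro Min_in) auto
  have lminD: "lambda_min D \<in> eigenvalues D - {0}" unfolding lambda_min_def
    using finD neD0 by (intro Min_in) auto
  have a1: "lambda_max E \<le> lambda_max D"
  proof -
    have "lambda_max E \<le> MD" using upper[OF lmaxE] .
    also have "MD \<le> lambda_max D" unfolding lambda_max_def using finD MD by (rule Max_ge)
    finally show ?thesis .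
  qed
  have a2: "lambda_min D \<le> lambda_min E"
  proof -
    have "lambda_min D \<le> m" unfolding lambda_min_def using finD m by (intro Min_le) auto
    also have "m \<le> lambda_min E" using lower lminE by blast
    finally show ?thesis .
  qed
  have a3: "0 < lambda_min D"
    using eig_nonneg[of D "lambda_min D"] pD lminD by force
  have a4: "0 \<le> lambda_max E"
  proof -
    have "lambda_min E \<le> lambda_max E" unfolding lambda_max_def using finE lminE by (intro Max_ge) auto
    thus ?thesis using a2 a3 by linarith
  qed
  show ?thesis unfolding kappa_def
    by (rule frac_le[OF _ a1 a3 a2]) (use a4 a1 in linarith)
qed

theorem lemma3:
  fixes A G :: "real^'n^'n" and u :: "real^'n"
  assumes "pos_def A" and "pos_def G" and "loewner_le A G"
    and "u \<bullet> ((G - A) *v u) > 0"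
  shows "rank (SR1 A G u - A) = rank (G - A) - 1
     \<and> (SR1 A G u - A \<noteq> 0 \<longrightarrow> kappa (SR1 A G u - A) \<le> kappa (G - A))"
proof -
  define D where "D = G - A"
  define E where "E = SR1 A G u - A"
  have psd: "pos_semidef D" using assms(3) unfolding loewner_le_def D_def .
  have sD: "symm D" using psd unfolding pos_semidef_def by (simp add: sym_mat_symm)
  have pD: "\<And>x. 0 \<le> x \<bullet> (D *v x)" using psd unfolding pos_semidef_def by simp
  have c: "u \<bullet> (D *v u) > 0" using assms(4) D_def by simp
  have Du0: "D *v u \<noteq> 0" using c by auto
  have SR: "SR1 A G u = G - (1 / (u \<bullet> (D *v u))) *\<^sub>R (D ** outer u u ** D)"
    using Du0 unfolding SR1_def D_def by simp
  have Ev: "E *v x = D *v x - (((D *v u) \<bullet> x) / (u \<bullet> (D *v u))) *\<^sub>R (D *v u)" for x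
  proof -
    have "(D ** outer u u ** D) *v x = D *v (outer u u *v (D *v x))"
      by (simp only: matrix_vector_mul_assoc[symmetric])
    also have "\<dots> = (u \<bullet> (D *v x)) *\<^sub>R (D *v u)" by (simp add: outer_mv matrix_vector_mult_scaleR)
    also have "\<dots> = ((D *v u) \<bullet> x) *\<^sub>R (D *v u)" using sD unfolding symm_def by simp
    finally have h: "(D ** outer u u ** D) *v x = ((D *v u) \<bullet> x) *\<^sub>R (D *v u)" .
    have "E *v x = G *v x - (1 / (u \<bullet> (D *v u))) *\<^sub>R ((D ** outer u u ** D) *v x) - A *v x"
      unfolding E_def SR by (simp add: matrix_vector_mult_diff_rdistrib scaleR_matrix_vector_assoc)
    also have "\<dots> = (G *v x - A *v x) - (1 / (u \<bullet> (D *v u))) *\<^sub>R (((D *v u) \<bullet> x) *\<^sub>R (D *v u))"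
      unfolding h by (simp add: algebra_simps)
    also have "\<dots> = D *v x - (((D *v u) \<bullet> x) / (u \<bullet> (D *v u))) *\<^sub>R (D *v u)"
      unfolding D_def by (simp add: matrix_vector_mult_diff_rdistrib)
    finally show ?thesis .
  qed
  have "rank E = rank D - 1" by (rule core_rank[OF sD pD c Ev])
  moreover have "E \<noteq> 0 \<longrightarrow> kappa E \<le> kappa D"
    using core_kappa[OF sD pD c Ev] by blast
  ultimately show ?thesis unfolding E_def D_def by blast
qed

end
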